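(* The relation $\{(\rho,\sigma,\pi):\sigma=[n],\ \rho=[r],\text{ and the part } r \text{ appears in }\pi\text{ exactly }n\text{ times}\}$ is $\Pi_3$-definable in $\mathbf Y^*=\langle\mathcal P,\le,[1]+[1]\rangle$.
   Context: $\mathcal P$ is the set of all integer partitions, including the empty partition; a partition is a nonincreasing finite sequence of positive integers (its parts). $[n]$ denotes the partition with a single part $n$. Young's lattice $\mathbf Y=\langle\mathcal P,\le\rangle$ has $(s_1,\dots,s_r)\le(n_1,\dots,n_t)$ iff $r\le t$ and $s_i\le n_i$ for all $i\le r$; $\mathbf Y^*$ is $\mathbf Y$ with a constant symbol for the partition $(1,1)$. A relation is $\Pi_n$-definable if it is defined by a first-order formula in the language $\{\le,(1,1)\}$ in prenex form with $n$ alternating quantifier blocks, the outermost universal, and a quantifier-free matrix. *)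

theory Defs
  imports Main
begin

typedef partition = "{xs :: nat list. sorted_wrt (\<ge>) xs \<and> 0 \<notin> set xs}"
  by (rule exI[of _ "[]"]) simp

definition young_le :: "partition \<Rightarrow> partition \<Rightarrow> bool" where
  "young_le p q \<longleftrightarrow> length (Rep_partition p) \<le> length (Rep_partition q) \<and>
     (\<forall>i < length (Rep_partition p). Rep_partition p ! i \<le> Rep_partition q ! i)"

text \<open>The partition [n] with a single part n (meaningful for n \<ge> 1).\<close>
definition single :: "nat \<Rightarrow> partition" where
  "single n = Abs_partition [n]"

definition one_one :: partition where
  "one_one = Abs_partition [1, 1]"

definition mult_part :: "nat \<Rightarrow> partition \<Rightarrow> nat" where
  "mult_part r p = count_list (Rep_partition p) r"

datatype trm = V nat | C

datatype fm = Le trm trm | Eq trm trm | Tru | Fls | Neg fm | Conj fm fm | Disj fm fm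
  | Ex nat fm | All nat fm

fun tval :: "(nat \<Rightarrow> partition) \<Rightarrow> trm \<Rightarrow> partition" where
  "tval e (V x) = e x"
| "tval e C = one_one"

fun sat :: "fm \<Rightarrow> (nat \<Rightarrow> partition) \<Rightarrow> bool" where
  "sat (Le s t) e = young_le (tval e s) (tval e t)"
| "sat (Eq s t) e = (tval e s = tval e t)"
| "sat Tru e = True"
| "sat Fls e = False"
| "sat (Neg f) e = (\<not> sat f e)"
| "sat (Conj f g) e = (sat f e \<and> sat g e)"
| "sat (Disj f g) e = (sat f e \<or> sat g e)"
| "sat (Ex x f) e = (\<exists>p. sat f (e(x := p)))"
| "sat (All x f) e = (\<forall>p. sat f (e(x := p)))"

fun qf :: "fm \<Rightarrow> bool" where
  "qf (Neg f) = qf f"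
| "qf (Conj f g) = (qf f \<and> qf g)"
| "qf (Disj f g) = (qf f \<and> qf g)"
| "qf (Ex x f) = False"
| "qf (All x f) = False"
| "qf _ = True"

fun exblock :: "nat list \<Rightarrow> fm \<Rightarrow> fm" where
  "exblock [] f = f"
| "exblock (x # xs) f = Ex x (exblock xs f)"

fun allblock :: "nat list \<Rightarrow> fm \<Rightarrow> fm" where
  "allblock [] f = f"
| "allblock (x # xs) f = All x (allblock xs f)"

fun is_Pi :: "nat \<Rightarrow> fm \<Rightarrow> bool" and is_Sigma :: "nat \<Rightarrow> fm \<Rightarrow> bool" where
  "is_Pi 0 f = qf f"
| "is_Sigma 0 f = qf f"
| "is_Pi (Suc n) f = (\<exists>xs g. f = allblock xs g \<and> is_Sigma n g)"
| "is_Sigma (Suc n) f = (\<exists>xs g. f = exblock xs g \<and> is_Pi n g)"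

definition Pi_definable3 :: "nat \<Rightarrow> (partition \<Rightarrow> partition \<Rightarrow> partition \<Rightarrow> bool) \<Rightarrow> bool" where
  "Pi_definable3 n R \<longleftrightarrow> (\<exists>f. is_Pi n f \<and> (\<forall>e. sat f e \<longleftrightarrow> R (e 0) (e 1) (e 2)))"

end

theory Submission
  imports Defs
begin


definition pt :: "partition \<Rightarrow> nat \<Rightarrow> nat" where
  "pt p i = (if i < length (Rep_partition p) then Rep_partition p ! i else 0)"

lemma Rep_props: "sorted_wrt (\<ge>) (Rep_partition p)" "0 \<notin> set (Rep_partition p)"
  using Rep_partition[of p] by auto

lemma pt_antimono: assumes "i \<le> j" shows "pt p j \<le> pt p i"
proof (cases "j < length (Rep_partition p)")
  case True
  then show ?thesis using assms Rep_props(1)[of p]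
    by (cases "i = j") (auto simp: pt_def sorted_wrt_iff_nth_less)
next
  case False
  then show ?thesis by (simp add: pt_def)
qed

lemma pt_pos_iff: "0 < pt p i \<longleftrightarrow> i < length (Rep_partition p)"
proof -
  have "i < length (Rep_partition p) \<Longrightarrow> Rep_partition p ! i \<noteq> 0"
    using Rep_props(2)[of p] by (metis nth_mem)
  then show ?thesis by (auto simp: pt_def)
qed

lemma le_iff: "young_le p q \<longleftrightarrow> (\<forall>i. pt p i \<le> pt q i)"
proof
  assume "young_le p q"
  then show "\<forall>i. pt p i \<le> pt q i" by (auto simp: young_le_def pt_def)
next
  assume A: "\<forall>i. pt p i \<le> pt q i"
  have L: "length (Rep_partition p) \<le> length (Rep_partition q)"
  proof (rule ccontr)
    assume "\<not> ?thesis"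
    then have "0 < pt p (length (Rep_partition q))" using pt_pos_iff by auto
    moreover have "pt q (length (Rep_partition q)) = 0" by (simp add: pt_def)
    ultimately show False using A by (metis not_le)
  qed
  show "young_le p q" unfolding young_le_def
  proof (intro conjI L allI impI)
    fix i assume "i < length (Rep_partition p)"
    then show "Rep_partition p ! i \<le> Rep_partition q ! i"
      using A[rule_format, of i] L by (simp add: pt_def)
  qed
qed

lemma part_eq_iff: "p = q \<longleftrightarrow> (\<forall>i. pt p i = pt q i)"
proof
  assume A: "\<forall>i. pt p i = pt q i"
  have L: "length (Rep_partition p) = length (Rep_partition q)"
    using A pt_pos_iff by (metis le_iff le_antisym not_le young_le_def order_refl)
  have "Rep_partition p = Rep_partition q"
  proof (rule nth_equalityI[OF L])
    fix i assume "i < length (Rep_partition p)"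
    then show "Rep_partition p ! i = Rep_partition q ! i" using A[rule_format, of i] L
      by (simp add: pt_def)
  qed
  then show "p = q" by (simp add: Rep_partition_inject)
qed simp

lemma exists_part:
  assumes mono: "\<And>i j. i \<le> j \<Longrightarrow> f j \<le> (f i :: nat)" and fin: "\<And>i. N \<le> i \<Longrightarrow> f i = 0"
  shows "\<exists>p. \<forall>i. pt p i = f i"
proof -
  define L where "L = (LEAST i. f i = 0)"
  have fN: "f N = 0" using fin by simp
  have fL: "f L = 0" unfolding L_def by (rule LeastI[of _ N]) (rule fN)
  have pos: "i < L \<Longrightarrow> 0 < f i" for i unfolding L_def using not_less_Least by auto
  have zero: "L \<le> i \<Longrightarrow> f i = 0" for i using mono[of L i] fL by simp
  define xs where "xs = map f [0..<L]"
  have "xs \<in> {xs :: nat list. sorted_wrt (\<ge>) xs \<and> 0 \<notin> set xs}"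
    unfolding xs_def using pos mono
    by (auto simp: sorted_wrt_iff_nth_less) (metis less_irrefl pos)
  then have R: "Rep_partition (Abs_partition xs) = xs" by (rule Abs_partition_inverse)
  show ?thesis
    by (rule exI[of _ "Abs_partition xs"]) (auto simp: pt_def R, auto simp: xs_def zero)
qed

lemma pt_single: "1 \<le> n \<Longrightarrow> pt (single n) i = (if i = 0 then n else 0)"
proof -
  assume "1 \<le> n"
  then have "[n] \<in> {xs :: nat list. sorted_wrt (\<ge>) xs \<and> 0 \<notin> set xs}" by auto
  then have "Rep_partition (single n) = [n]" unfolding single_def by (rule Abs_partition_inverse)
  then show ?thesis by (auto simp: pt_def)
qed

lemma pt_one_one: "pt one_one i = (if i < 2 then 1 else 0)"
proof -
  have "[1,1] \<in> {xs :: nat list. sorted_wrt (\<ge>) xs \<and> 0 \<notin> set xs}" by auto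
  then have "Rep_partition one_one = [1,1]" unfolding one_one_def by (rule Abs_partition_inverse)
  then show ?thesis by (auto simp: pt_def nth_Cons split: nat.splits)
qed

lemma mult_part_card: "mult_part r p = card {i. i < length (Rep_partition p) \<and> pt p i = r}"
  unfolding mult_part_def count_list_eq_length_filter length_filter_conv_card
  by (rule arg_cong[where f=card]) (auto simp: pt_def)




abbreviation len :: "partition \<Rightarrow> nat" where "len p \<equiv> length (Rep_partition p)"

lemma exists_part':
  assumes "\<And>i. f (Suc i) \<le> (f i::nat)" "\<And>i. N \<le> i \<Longrightarrow> f i = 0"
  shows "\<exists>p. \<forall>i. pt p i = f i"
proof (rule exists_part[of f N])
  show "\<And>i j. i \<le> j \<Longrightarrow> f j \<le> f i" using lift_Suc_antimono_le[of f] assms(1) by blast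
qed (use assms in auto)

lemma pt_zero: "len p \<le> i \<Longrightarrow> pt p i = 0" by (simp add: pt_def)
lemma pt_Suc_le: "pt p (Suc i) \<le> pt p i" by (rule pt_antimono) simp

definition isrow :: "partition \<Rightarrow> bool" where "isrow z \<longleftrightarrow> \<not> young_le one_one z"

lemma row_iff: "\<not> young_le one_one z \<longleftrightarrow> pt z 1 = 0"
proof
  assume A: "\<not> young_le one_one z"
  show "pt z 1 = 0"
  proof (rule ccontr)
    assume "pt z 1 \<noteq> 0"
    then have "1 \<le> pt z 1" "1 \<le> pt z 0" using pt_antimono[of 0 1 z] by auto
    then have "\<forall>i. pt one_one i \<le> pt z i"
    proof (intro allI)
      fix i show "pt one_one i \<le> pt z i"
      proof (cases "i = 0 \<or> i = 1")
        case True then show ?thesis using \<open>1 \<le> pt z 1\<close> \<open>1 \<le> pt z 0\<close> by (auto simp: pt_one_one)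
      next
        case False then show ?thesis by (simp add: pt_one_one)
      qed
    qed
    then show False using A le_iff by blast
  qed
next
  assume B: "pt z 1 = 0"
  have "\<not> pt one_one 1 \<le> pt z 1" unfolding pt_one_one B by simp
  then show "\<not> young_le one_one z" using le_iff by blast
qed

lemma isrow_iff: "isrow z \<longleftrightarrow> pt z 1 = 0" unfolding isrow_def by (rule row_iff)

lemma row_pt: "isrow z \<Longrightarrow> 0 < i \<Longrightarrow> pt z i = 0"
proof -
  assume A: "isrow z" "0 < i"
  have "pt z 1 = 0" using A(1) isrow_iff by blast
  moreover have "pt z i \<le> pt z 1" by (rule pt_antimono) (use A(2) in simp)
  ultimately show "pt z i = 0" by simp
qed

lemma row_le: assumes "isrow a" shows "young_le a b \<longleftrightarrow> pt a 0 \<le> pt b 0"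
proof
  assume H: "pt a 0 \<le> pt b 0"
  show "young_le a b" unfolding le_iff
  proof
    fix i show "pt a i \<le> pt b i"
      using H row_pt[OF assms, of i] by (cases i) auto
  qed
qed (simp add: le_iff)

lemma row_eq: assumes "isrow a" "isrow b" shows "a = b \<longleftrightarrow> pt a 0 = pt b 0"
proof
  assume H: "pt a 0 = pt b 0"
  show "a = b" unfolding part_eq_iff
  proof
    fix i show "pt a i = pt b i"
      using H row_pt[OF assms(1), of i] row_pt[OF assms(2), of i] by (cases i) auto
  qed
qed simp

lemma mkrow: "\<exists>z. isrow z \<and> pt z 0 = s"
proof -
  obtain z where z: "\<forall>i. pt z i = (if i = 0 then s else 0)"
    using exists_part'[of "\<lambda>i. if i = 0 then s else 0" 1] by auto
  then have "pt z 1 = 0" "pt z 0 = s" by auto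
  then show ?thesis using isrow_iff by blast
qed

lemma row_le_C: assumes "isrow d" shows "young_le d one_one \<longleftrightarrow> pt d 0 \<le> 1"
proof
  assume "young_le d one_one" then have "pt d 0 \<le> pt one_one 0" using le_iff by blast
  then show "pt d 0 \<le> 1" by (simp add: pt_one_one)
next
  assume H: "pt d 0 \<le> 1"
  show "young_le d one_one" unfolding le_iff
  proof
    fix i show "pt d i \<le> pt one_one i"
      using H row_pt[OF assms, of i] by (cases i) (auto simp: pt_one_one)
  qed
qed

lemma empty_part: "\<exists>p. \<forall>i. pt p i = 0"
  using exists_part'[of "\<lambda>i. 0" 0] by auto

lemma single_iff: "(isrow p \<and> (\<exists>y. \<not> young_le p y)) \<longleftrightarrow> (\<exists>r\<ge>1. p = single r)"
proof
  assume A: "isrow p \<and> (\<exists>y. \<not> young_le p y)"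
  have "pt p 0 \<noteq> 0"
  proof
    assume Z: "pt p 0 = 0"
    have "\<forall>i. pt p i = 0"
    proof
      fix i show "pt p i = 0" using Z A row_pt[of p i] by (cases i) auto
    qed
    then show False using A by (auto simp: le_iff)
  qed
  have "p = single (pt p 0)" unfolding part_eq_iff
  proof
    fix i show "pt p i = pt (single (pt p 0)) i"
      using \<open>pt p 0 \<noteq> 0\<close> A row_pt[of p i] by (cases i) (auto simp: pt_single)
  qed
  then show "\<exists>r\<ge>1. p = single r" using \<open>pt p 0 \<noteq> 0\<close> by (intro exI[of _ "pt p 0"]) auto
next
  assume "\<exists>r\<ge>1. p = single r"
  then obtain r where r: "r \<ge> 1" "p = single r" by auto
  obtain e where e: "\<forall>i. pt e i = 0" using empty_part by auto
  show "isrow p \<and> (\<exists>y. \<not> young_le p y)"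
  proof
    have "pt p 1 = 0" using r by (simp add: pt_single)
    then show "isrow p" using isrow_iff by blast
    have "\<not> pt p 0 \<le> pt e 0" using r e by (simp add: pt_single)
    then show "\<exists>y. \<not> young_le p y" using le_iff by blast
  qed
qed

definition NextP where
  "NextP t t' \<longleftrightarrow> isrow t' \<and> young_le t t' \<and> t \<noteq> t' \<and>
     (\<forall>z. isrow z \<and> young_le t z \<and> t \<noteq> z \<longrightarrow> young_le t' z)"

lemma NextP_iff: assumes "isrow t"
  shows "NextP t t' \<longleftrightarrow> isrow t' \<and> pt t' 0 = Suc (pt t 0)"
proof
  assume N: "NextP t t'"
  then have r: "isrow t'" and lt: "pt t 0 < pt t' 0"
    using assms by (auto simp: NextP_def row_le row_eq)
  obtain z where z: "isrow z" "pt z 0 = Suc (pt t 0)" using mkrow by blast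
  have "young_le t' z" using N z assms by (auto simp: NextP_def row_le row_eq)
  then show "isrow t' \<and> pt t' 0 = Suc (pt t 0)" using r lt z by (simp add: row_le)
next
  assume "isrow t' \<and> pt t' 0 = Suc (pt t 0)"
  then show "NextP t t'" using assms by (auto simp: NextP_def row_le row_eq)
qed

definition IsD2 where
  "IsD2 d \<longleftrightarrow> isrow d \<and> \<not> young_le d one_one \<and>
     (\<forall>z. isrow z \<and> \<not> young_le z one_one \<longrightarrow> young_le d z)"

lemma IsD2_iff: "IsD2 d \<longleftrightarrow> isrow d \<and> pt d 0 = 2"
proof
  assume A: "IsD2 d"
  obtain z where z: "isrow z" "pt z 0 = 2" using mkrow by blast
  have "young_le d z" using A z by (auto simp: IsD2_def row_le_C)
  then show "isrow d \<and> pt d 0 = 2" using A z by (auto simp: IsD2_def row_le_C row_le pt_one_one)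
next
  assume "isrow d \<and> pt d 0 = 2"
  then show "IsD2 d" by (auto simp: IsD2_def row_le_C row_le pt_one_one)
qed

lemma col_iff: "isrow d \<Longrightarrow> pt d 0 = 2 \<Longrightarrow> \<not> young_le d z \<longleftrightarrow> pt z 0 \<le> 1"
  by (auto simp: row_le)

lemma col_pt: "pt z 0 \<le> 1 \<Longrightarrow> pt z i = (if i < len z then 1 else 0)"
  using pt_antimono[of 0 i z] pt_pos_iff[of z i] by auto

lemma col_le: "pt K 0 \<le> 1 \<Longrightarrow> young_le K G \<longleftrightarrow> len K \<le> len G"
proof
  assume "young_le K G" then show "len K \<le> len G" by (simp add: young_le_def)
next
  assume "pt K 0 \<le> 1" "len K \<le> len G"
  then show "young_le K G" using pt_pos_iff[of G]
    by (auto simp: le_iff col_pt[of K] Suc_le_eq)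
qed

lemma col_eq: assumes "pt K 0 \<le> 1" "pt K' 0 \<le> 1" shows "K = K' \<longleftrightarrow> len K = len K'"
proof
  assume "len K = len K'"
  then have "young_le K K'" "young_le K' K" using assms col_le[of K K'] col_le[of K' K] by auto
  then have "\<forall>i. pt K i \<le> pt K' i \<and> pt K' i \<le> pt K i" by (simp add: le_iff)
  then show "K = K'" unfolding part_eq_iff using le_antisym by blast
qed simp

lemma mkrect: "\<exists>w. \<forall>i. pt w i = (if i < k then c else 0)"
  using exists_part'[of "\<lambda>i. if i < k then c else 0" k] by auto

lemma len_rect: "\<forall>i. pt w i = (if i < k then c else 0) \<Longrightarrow> 1 \<le> c \<Longrightarrow> len w = k"
proof -
  assume A: "\<forall>i. pt w i = (if i < k then c else 0)" "1 \<le> c"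
  have B: "\<forall>i. i < len w \<longleftrightarrow> i < k"
  proof
    fix i
    have "0 < pt w i \<longleftrightarrow> i < k" using A by auto
    then show "i < len w \<longleftrightarrow> i < k" using pt_pos_iff[of w i] by argo
  qed
  show ?thesis
  proof (rule ccontr)
    assume "len w \<noteq> k"
    then show False using B[rule_format, of "min (len w) k"] by (cases "len w < k") auto
  qed
qed

lemma mkcol: "\<exists>K. pt K 0 \<le> 1 \<and> len K = k"
proof -
  obtain w where w: "\<forall>i. pt w i = (if i < k then 1 else 0)" using mkrect by blast
  then show ?thesis using len_rect[OF w] by (intro exI[of _ w]) auto
qed




definition TruncP where
  "TruncP G th T \<longleftrightarrow> young_le T G \<and> \<not> young_le th T \<and>
     (\<forall>w. young_le w G \<and> \<not> young_le w T \<longrightarrow> young_le th w)"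

lemma TruncP_iff: assumes th: "isrow th" "1 \<le> pt th 0"
  shows "TruncP G th T \<longleftrightarrow> (\<forall>i. pt T i = min (pt G i) (pt th 0 - 1))"
proof
  assume A: "TruncP G th T"
  then have T1: "\<forall>i. pt T i \<le> pt G i"
    and T3: "\<forall>w. young_le w G \<and> \<not> young_le w T \<longrightarrow> young_le th w"
    by (auto simp: TruncP_def le_iff)
  have T2: "pt T 0 < pt th 0" using A row_le[OF th(1), of T] by (auto simp: TruncP_def)
  show "\<forall>i. pt T i = min (pt G i) (pt th 0 - 1)"
  proof
    fix i
    have a: "pt T i \<le> pt G i" using T1 by blast
    have b: "pt T i \<le> pt th 0 - 1" using T2 pt_antimono[of 0 i T] by simp
    show "pt T i = min (pt G i) (pt th 0 - 1)"
    proof (cases "pt T i = pt G i")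
      case True then show ?thesis using b by simp
    next
      case False
      then have lt: "pt T i < pt G i" using a by simp
      obtain w where w: "\<forall>j. pt w j = (if j < Suc i then Suc (pt T i) else 0)" using mkrect by blast
      have "young_le w G" unfolding le_iff
      proof
        fix j show "pt w j \<le> pt G j"
        proof (cases "j < Suc i")
          case True then have "pt G i \<le> pt G j" using pt_antimono by simp
          then show ?thesis using w lt True by simp
        qed (simp add: w)
      qed
      moreover have "\<not> young_le w T" unfolding le_iff using w by (auto intro!: exI[of _ i])
      ultimately have "young_le th w" using T3 by blast
      then have "pt th 0 \<le> Suc (pt T i)" using th w by (simp add: row_le)
      then show ?thesis using b lt by simp
    qed
  qed
next
  assume A: "\<forall>i. pt T i = min (pt G i) (pt th 0 - 1)"
  have "young_le T G" using A by (simp add: le_iff)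
  moreover have "\<not> young_le th T" using A th by (simp add: row_le) arith
  moreover have "young_le th w" if w: "young_le w G" "\<not> young_le w T" for w
  proof -
    obtain i where i: "pt T i < pt w i" using w(2) by (auto simp: le_iff not_le)
    have "pt w i \<le> pt G i" using w(1) by (simp add: le_iff)
    then have "pt T i = pt th 0 - 1" using A i by (auto simp: min_def split: if_splits)
    moreover have "pt w i \<le> pt w 0" using pt_antimono by simp
    ultimately show ?thesis using i th by (simp add: row_le)
  qed
  ultimately show "TruncP G th T" by (auto simp: TruncP_def)
qed

definition BoxP where
  "BoxP K th P \<longleftrightarrow> (\<forall>w. \<not> young_le th w \<and> \<not> young_le K w \<longrightarrow> young_le w P)"

lemma BoxP_iff: assumes th: "isrow th" and K: "pt K 0 \<le> 1"
  shows "BoxP K th P \<longleftrightarrow> (2 \<le> len K \<and> 2 \<le> pt th 0 \<longrightarrow> pt th 0 - 1 \<le> pt P (len K - 2))"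
proof
  assume B: "BoxP K th P"
  show "2 \<le> len K \<and> 2 \<le> pt th 0 \<longrightarrow> pt th 0 - 1 \<le> pt P (len K - 2)"
  proof
    assume H: "2 \<le> len K \<and> 2 \<le> pt th 0"
    obtain w where w: "\<forall>j. pt w j = (if j < len K - 1 then pt th 0 - 1 else 0)" using mkrect by blast
    have "1 \<le> pt th 0 - 1" using H by arith
    then have lw: "len w = len K - 1" using len_rect[OF w] by simp
    have "\<not> young_le th w" using th w H by (simp add: row_le) arith
    moreover have "\<not> young_le K w" using col_le[OF K, of w] lw H by simp arith
    ultimately have "young_le w P" using B by (auto simp: BoxP_def)
    then have "pt w (len K - 2) \<le> pt P (len K - 2)" by (simp add: le_iff)
    moreover have "len K - 2 < len K - 1" using H by arith
    ultimately show "pt th 0 - 1 \<le> pt P (len K - 2)" using w H by simp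
  qed
next
  assume H: "2 \<le> len K \<and> 2 \<le> pt th 0 \<longrightarrow> pt th 0 - 1 \<le> pt P (len K - 2)"
  show "BoxP K th P" unfolding BoxP_def
  proof (intro allI impI)
    fix w assume w: "\<not> young_le th w \<and> \<not> young_le K w"
    then have w0: "pt w 0 < pt th 0" and lw: "len w < len K" using th col_le[OF K, of w]
      by (auto simp: row_le)
    show "young_le w P" unfolding le_iff
    proof
      fix i show "pt w i \<le> pt P i"
      proof (cases "i < len w")
        case False then show ?thesis by (simp add: pt_zero)
      next
        case True
        have wi: "pt w i \<le> pt w 0" using pt_antimono by simp
        show ?thesis
        proof (cases "pt th 0 < 2")
          case True then show ?thesis using wi w0 by simp
        next
          case False
          have "2 \<le> len K" using \<open>i < len w\<close> lw by simp
          then have "pt th 0 - 1 \<le> pt P (len K - 2)" using H False by simp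
          moreover have "pt P (len K - 2) \<le> pt P i" using pt_antimono \<open>i < len w\<close> lw by simp
          ultimately show ?thesis using wi w0 by simp
        qed
      qed
    qed
  qed
qed

definition EqAP where
  "EqAP D G s2 P r2 \<longleftrightarrow> (\<forall>K. \<not> young_le D K \<longrightarrow> (BoxP K s2 G \<longleftrightarrow> BoxP K r2 P))"

lemma EqAP_iff: assumes D: "IsD2 D" and s2: "isrow s2" "pt s2 0 = n + 2"
  and r2: "isrow r2" "pt r2 0 = r + 2"
  shows "EqAP D G s2 P r2 \<longleftrightarrow> (\<forall>m. n + 1 \<le> pt G m \<longleftrightarrow> r + 1 \<le> pt P m)"
proof -
  have D': "isrow D" "pt D 0 = 2" using D by (auto simp: IsD2_iff)
  have col: "\<not> young_le D K \<longleftrightarrow> pt K 0 \<le> 1" for K using col_iff[OF D'] by blast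
  show ?thesis
  proof
    assume E: "EqAP D G s2 P r2"
    show "\<forall>m. n + 1 \<le> pt G m \<longleftrightarrow> r + 1 \<le> pt P m"
    proof
      fix m
      obtain K where K: "pt K 0 \<le> 1" "len K = m + 2" using mkcol by blast
      have "BoxP K s2 G \<longleftrightarrow> BoxP K r2 P" using E K col by (auto simp: EqAP_def)
      then show "n + 1 \<le> pt G m \<longleftrightarrow> r + 1 \<le> pt P m"
        using BoxP_iff[OF s2(1) K(1)] BoxP_iff[OF r2(1) K(1)] K s2 r2 by simp
    qed
  next
    assume A: "\<forall>m. n + 1 \<le> pt G m \<longleftrightarrow> r + 1 \<le> pt P m"
    show "EqAP D G s2 P r2" unfolding EqAP_def
    proof (intro allI impI)
      fix K assume "\<not> young_le D K"
      then have K: "pt K 0 \<le> 1" using col by blast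
      show "BoxP K s2 G \<longleftrightarrow> BoxP K r2 P"
        using BoxP_iff[OF s2(1) K] BoxP_iff[OF r2(1) K] s2 r2 A[rule_format, of "len K - 2"] by simp
    qed
  qed
qed

definition QP where
  "QP D G K1 K2 r1 P \<longleftrightarrow> \<not> young_le D K1 \<and> \<not> young_le K1 G \<and>
     (\<forall>z. \<not> young_le D z \<and> young_le z K1 \<and> z \<noteq> K1 \<longrightarrow> young_le z G) \<and>
     \<not> young_le D K2 \<and> young_le K1 K2 \<and> K1 \<noteq> K2 \<and>
     (\<forall>z. \<not> young_le D z \<and> young_le z K2 \<and> z \<noteq> K2 \<longrightarrow> young_le z K1) \<and>
     BoxP K1 r1 P \<and> \<not> BoxP K2 r1 P"

lemma QP_iff: assumes D: "IsD2 D" and r1: "isrow r1" "pt r1 0 = r + 1" and r: "1 \<le> r"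
  shows "(\<exists>K1 K2. QP D G K1 K2 r1 P) \<longleftrightarrow> ((1 \<le> len G \<longrightarrow> r \<le> pt P (len G - 1)) \<and> pt P (len G) < r)"
proof -
  have D': "isrow D" "pt D 0 = 2" using D by (auto simp: IsD2_iff)
  have col: "\<not> young_le D K \<longleftrightarrow> pt K 0 \<le> 1" for K using col_iff[OF D'] by blast
  show ?thesis
  proof
    assume "\<exists>K1 K2. QP D G K1 K2 r1 P"
    then obtain K1 K2 where Q: "QP D G K1 K2 r1 P" by blast
    have c1: "pt K1 0 \<le> 1" and c2: "pt K2 0 \<le> 1" using Q col by (auto simp: QP_def)
    have l1: "len G < len K1" using Q col_le[OF c1, of G] by (auto simp: QP_def)
    obtain z where z: "pt z 0 \<le> 1" "len z = len K1 - 1" using mkcol by blast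
    have "young_le z K1" "z \<noteq> K1" using z col_le[OF z(1), of K1] col_eq[OF z(1) c1] l1 by auto
    then have "young_le z G" using Q z col by (auto simp: QP_def)
    then have l1': "len K1 = len G + 1" using col_le[OF z(1), of G] z l1 by simp
    have l2: "len K1 < len K2" using Q col_le[OF c1, of K2] col_eq[OF c1 c2] by (auto simp: QP_def)
    obtain z2 where z2: "pt z2 0 \<le> 1" "len z2 = len K2 - 1" using mkcol by blast
    have "young_le z2 K2" "z2 \<noteq> K2" using z2 col_le[OF z2(1), of K2] col_eq[OF z2(1) c2] l2 by auto
    then have "young_le z2 K1" using Q z2 col by (auto simp: QP_def)
    then have l2': "len K2 = len G + 2" using col_le[OF z2(1), of K1] z2 l2 l1' by simp
    have "BoxP K1 r1 P" "\<not> BoxP K2 r1 P" using Q by (auto simp: QP_def)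
    then show "(1 \<le> len G \<longrightarrow> r \<le> pt P (len G - 1)) \<and> pt P (len G) < r"
      using BoxP_iff[OF r1(1) c1] BoxP_iff[OF r1(1) c2] l1' l2' r1 r by auto
  next
    assume H: "(1 \<le> len G \<longrightarrow> r \<le> pt P (len G - 1)) \<and> pt P (len G) < r"
    obtain K1 where K1: "pt K1 0 \<le> 1" "len K1 = len G + 1" using mkcol by blast
    obtain K2 where K2: "pt K2 0 \<le> 1" "len K2 = len G + 2" using mkcol by blast
    have "QP D G K1 K2 r1 P" unfolding QP_def
    proof (intro conjI allI impI)
      show "\<not> young_le D K1" "\<not> young_le D K2" using K1 K2 col by auto
      show "\<not> young_le K1 G" using col_le[OF K1(1)] K1 by simp
      show "young_le K1 K2" "K1 \<noteq> K2" using col_le[OF K1(1)] col_eq[OF K1(1) K2(1)] K1 K2 by auto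
      fix z assume z: "\<not> young_le D z \<and> young_le z K1 \<and> z \<noteq> K1"
      then have zc: "pt z 0 \<le> 1" using col by blast
      then show "young_le z G" using z col_le[OF zc, of K1] col_eq[OF zc K1(1)] col_le[OF zc, of G] K1
        by auto
    next
      fix z assume z: "\<not> young_le D z \<and> young_le z K2 \<and> z \<noteq> K2"
      then have zc: "pt z 0 \<le> 1" using col by blast
      then show "young_le z K1" using z col_le[OF zc, of K2] col_eq[OF zc K2(1)] col_le[OF zc, of K1] K1 K2
        by auto
    next
      show "BoxP K1 r1 P" "\<not> BoxP K2 r1 P"
        using BoxP_iff[OF r1(1) K1(1)] BoxP_iff[OF r1(1) K2(1)] K1 K2 r1 r H by auto
    qed
    then show "\<exists>K1 K2. QP D G K1 K2 r1 P" by blast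
  qed
qed




definition UI where
  "UI u v G \<longleftrightarrow> young_le u v \<and> u \<noteq> v \<and> young_le v G \<and> v \<noteq> G \<and>
     (\<forall>w. young_le u w \<and> u \<noteq> w \<and> young_le w G \<and> w \<noteq> G \<longrightarrow> w = v)"

definition DFP where "DFP G T \<longleftrightarrow> (\<forall>u v. UI u v G \<longrightarrow> young_le T u)"

lemma trapped:
  assumes "UI u v G" "\<forall>j. j \<noteq> i \<longrightarrow> pt u j = pt G j" "pt G i = Suc (pt u i)"
  shows False
proof -
  have uv: "\<forall>j. pt u j \<le> pt v j" and vG: "\<forall>j. pt v j \<le> pt G j" and ne: "u \<noteq> v" "v \<noteq> G"
    using assms(1) by (auto simp: UI_def le_iff)
  have A: "pt v j = pt u j" if "j \<noteq> i" for j
    using uv[rule_format, of j] vG[rule_format, of j] assms(2) that by simp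
  have A2: "pt v j = pt G j" if "j \<noteq> i" for j
    using A[OF that] assms(2) that by simp
  have "pt v i = pt u i \<or> pt v i = pt G i" using uv[rule_format, of i] vG[rule_format, of i] assms(3)
    by linarith
  then show False
  proof
    assume "pt v i = pt u i"
    then have "\<forall>j. pt u j = pt v j" using A by (metis)
    then show False using ne(1) by (simp add: part_eq_iff)
  next
    assume "pt v i = pt G i"
    then have "\<forall>j. pt v j = pt G j" using A2 by (metis)
    then show False using ne(2) by (simp add: part_eq_iff)
  qed
qed

lemma domino:
  assumes UI: "UI u v G"
  shows "(\<exists>i. pt u i + 2 = pt G i \<and> (\<forall>j. j \<noteq> i \<longrightarrow> pt u j = pt G j)) \<or>
         (\<exists>i. pt G i = pt G (Suc i) \<and> pt u i + 1 = pt G i \<and> pt u (Suc i) + 1 = pt G (Suc i) \<and>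
              (\<forall>j. j \<noteq> i \<and> j \<noteq> Suc i \<longrightarrow> pt u j = pt G j))"
proof -
  have uv: "\<forall>j. pt u j \<le> pt v j" and vG: "\<forall>j. pt v j \<le> pt G j" and ne: "u \<noteq> v" "v \<noteq> G"
    and uni: "\<And>w. young_le u w \<Longrightarrow> u \<noteq> w \<Longrightarrow> young_le w G \<Longrightarrow> w \<noteq> G \<Longrightarrow> w = v"
    using UI by (auto simp: UI_def le_iff)
  have uG: "\<forall>j. pt u j \<le> pt G j" using uv vG order_trans by blast
  define S where "S = {i. pt u i < pt G i}"
  have Sfin: "finite S"
  proof (rule finite_subset[of S "{..<len G}"])
    show "S \<subseteq> {..<len G}"
    proof
      fix x assume "x \<in> S"
      then have "0 < pt G x" by (simp add: S_def)
      then show "x \<in> {..<len G}" using pt_pos_iff by simp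
    qed
  qed simp
  have Sne: "S \<noteq> {}"
  proof
    assume "S = {}"
    then have e: "\<forall>j. pt u j = pt G j" using uG unfolding S_def by (auto simp: not_less le_antisym)
    have "\<forall>j. pt u j = pt v j"
    proof
      fix j show "pt u j = pt v j" using e uv[rule_format, of j] vG[rule_format, of j] by simp
    qed
    then show False using ne(1) by (simp add: part_eq_iff)
  qed
  define i0 where "i0 = Min S"
  define i1 where "i1 = Max S"
  have i0S: "i0 \<in> S" and i1S: "i1 \<in> S" using Sfin Sne by (auto simp: i0_def i1_def)
  have below: "pt u j = pt G j" if "j < i0" for j
  proof -
    have "j \<notin> S" using Min_le[OF Sfin, of j] that unfolding i0_def by auto
    then show ?thesis using uG[rule_format, of j] by (simp add: S_def)
  qed
  have above: "pt u j = pt G j" if "i1 < j" for j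
  proof -
    have "j \<notin> S" using Max_ge[OF Sfin, of j] that unfolding i1_def by auto
    then show ?thesis using uG[rule_format, of j] by (simp add: S_def)
  qed
  have i01: "i0 \<le> i1" using Sfin Sne by (simp add: i0_def i1_def)
  have lt0: "pt u i0 < pt G i0" and lt1: "pt u i1 < pt G i1" using i0S i1S by (auto simp: S_def)
  define f where "f j = (if j = i0 then Suc (pt u j) else pt u j)" for j
  have "\<exists>p. \<forall>j. pt p j = f j"
  proof (rule exists_part'[of f "len G"])
    fix j show "f (Suc j) \<le> f j"
    proof (cases "Suc j = i0")
      case True
      then have "pt u j = pt G j" using below by simp
      moreover have "pt G (Suc j) \<le> pt G j" by (rule pt_Suc_le)
      ultimately show ?thesis using True lt0 by (simp add: f_def)
    next
      case False then show ?thesis using pt_Suc_le[of u j] by (auto simp: f_def)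
    qed
  next
    fix j assume "len G \<le> j"
    then have "pt G j = 0" by (simp add: pt_zero)
    moreover have "j \<noteq> i0" using lt0 \<open>pt G j = 0\<close> by auto
    ultimately show "f j = 0" using uG[rule_format, of j] by (simp add: f_def)
  qed
  then obtain p2 where p2: "\<forall>j. pt p2 j = f j" by blast
  have p2v: "p2 = v"
  proof (rule uni)
    show "young_le u p2" using p2 by (simp add: le_iff f_def)
    show "u \<noteq> p2" using p2 by (auto simp: part_eq_iff f_def intro!: exI[of _ i0])
    show "young_le p2 G" using p2 uG lt0 by (auto simp: le_iff f_def Suc_le_eq)
    show "p2 \<noteq> G"
    proof
      assume "p2 = G"
      then have "\<forall>j. pt G j = f j" using p2 by simp
      then show False using trapped[OF UI, of i0] by (simp add: f_def)
    qed
  qed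
  define g where "g j = (if j = i1 then pt G j - 1 else pt G j)" for j
  have "\<exists>p. \<forall>j. pt p j = g j"
  proof (rule exists_part'[of g "len G"])
    fix j show "g (Suc j) \<le> g j"
    proof (cases "j = i1")
      case True
      then have "pt G (Suc j) = pt u (Suc j)" using above by simp
      moreover have "pt u (Suc j) \<le> pt u j" by (rule pt_Suc_le)
      ultimately show ?thesis using True lt1 by (simp add: g_def)
    next
      case False then show ?thesis using pt_Suc_le[of G j] by (auto simp: g_def)
    qed
  next
    fix j assume "len G \<le> j"
    then show "g j = 0" by (simp add: pt_zero g_def)
  qed
  then obtain p1 where p1: "\<forall>j. pt p1 j = g j" by blast
  have p1v: "p1 = v"
  proof (rule uni)
    show "young_le u p1" using p1 uG lt1 by (auto simp: le_iff g_def)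
    show "young_le p1 G" using p1 by (simp add: le_iff g_def)
    show "p1 \<noteq> G" using p1 lt1 by (auto simp: part_eq_iff g_def intro!: exI[of _ i1])
    show "u \<noteq> p1"
    proof
      assume "u = p1"
      then have "\<forall>j. pt u j = g j" using p1 by simp
      then show False using trapped[OF UI, of i1] lt1 by (auto simp: g_def)
    qed
  qed
  have fg: "\<forall>j. f j = g j" using p1 p2 p1v p2v by simp
  show ?thesis
  proof (cases "i0 = i1")
    case True
    have "pt u i0 + 2 = pt G i0" using fg[rule_format, of i0] True lt0 by (simp add: f_def g_def)
    moreover have "\<forall>j. j \<noteq> i0 \<longrightarrow> pt u j = pt G j"
    proof (intro allI impI)
      fix j assume "j \<noteq> i0" then show "pt u j = pt G j" using fg[rule_format, of j] True by (simp add: f_def g_def)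
    qed
    ultimately show ?thesis by blast
  next
    case False
    then have i01': "i0 < i1" using i01 by simp
    have e0: "Suc (pt u i0) = pt G i0" using fg[rule_format, of i0] False by (simp add: f_def g_def)
    have e1: "pt u i1 + 1 = pt G i1" using fg[rule_format, of i1] False lt1 by (simp add: f_def g_def)
    have eo: "\<forall>j. j \<noteq> i0 \<and> j \<noteq> i1 \<longrightarrow> pt u j = pt G j"
    proof (intro allI impI)
      fix j assume "j \<noteq> i0 \<and> j \<noteq> i1" then show "pt u j = pt G j" using fg[rule_format, of j] by (simp add: f_def g_def)
    qed
    define h where "h j = (if j = i1 then Suc (pt u j) else pt u j)" for j
    have notmono: "\<not> (\<forall>j. h (Suc j) \<le> h j)"
    proof
      assume M: "\<forall>j. h (Suc j) \<le> h j"
      have "\<exists>p. \<forall>j. pt p j = h j"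
      proof (rule exists_part'[of h "len G"])
        fix j assume "len G \<le> j"
        then have "pt G j = 0" by (simp add: pt_zero)
        moreover have "j \<noteq> i1" using lt1 \<open>pt G j = 0\<close> by auto
        ultimately show "h j = 0" using uG[rule_format, of j] by (simp add: h_def)
      qed (use M in blast)
      then obtain p3 where p3: "\<forall>j. pt p3 j = h j" by blast
      have "p3 = v"
      proof (rule uni)
        show "young_le u p3" using p3 by (simp add: le_iff h_def)
        show "u \<noteq> p3" using p3 by (auto simp: part_eq_iff h_def intro!: exI[of _ i1])
        show "young_le p3 G" using p3 uG e1 by (auto simp: le_iff h_def)
        show "p3 \<noteq> G" using p3 False lt0 by (auto simp: part_eq_iff h_def intro!: exI[of _ i0])
      qed
      then have "h i0 = f i0" using p3 p2 p2v by simp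
      then show False using False by (simp add: h_def f_def)
    qed
    then obtain j where j: "h j < h (Suc j)" by (auto simp: not_le)
    have sj: "Suc j = i1"
    proof (rule ccontr)
      assume "Suc j \<noteq> i1"
      then show False using j pt_Suc_le[of u j] by (auto simp: h_def split: if_splits)
    qed
    have uj: "pt u j = pt u i1" using j sj pt_Suc_le[of u j] by (auto simp: h_def)
    have ji0: "j = i0"
    proof (rule ccontr)
      assume "j \<noteq> i0"
      then have "pt u j = pt G j" using eo sj by auto
      moreover have "pt G i1 \<le> pt G j" using pt_Suc_le[of G j] sj by simp
      ultimately show False using uj e1 by simp
    qed
    have "pt G i0 = pt G (Suc i0)" using e0 e1 uj ji0 sj by simp
    moreover have "\<forall>k. k \<noteq> i0 \<and> k \<noteq> Suc i0 \<longrightarrow> pt u k = pt G k" using eo ji0 sj by simp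
    ultimately show ?thesis using e0 e1 ji0 sj by auto
  qed
qed




lemma UI_intro:
  assumes "\<forall>j. pt u j \<le> pt v j" "\<forall>j. pt v j \<le> pt G j" "\<exists>j. pt u j \<noteq> pt v j" "\<exists>j. pt v j \<noteq> pt G j"
    and "\<And>w. \<forall>j. pt u j \<le> pt w j \<Longrightarrow> \<forall>j. pt w j \<le> pt G j \<Longrightarrow> \<exists>j. pt u j \<noteq> pt w j \<Longrightarrow>
            \<exists>j. pt w j \<noteq> pt G j \<Longrightarrow> \<forall>j. pt w j = pt v j"
  shows "UI u v G"
  unfolding UI_def le_iff part_eq_iff using assms by metis

lemma no_hgap:
  assumes DF: "DFP G T" and T: "\<forall>i. pt T i = min (pt G i) n" and G0: "pt G 0 \<le> n + 1"
  shows "pt G i \<le> pt G (Suc i) + 1"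
proof (rule ccontr)
  assume "\<not> ?thesis"
  then have gap: "pt G (Suc i) + 2 \<le> pt G i" by simp
  define f where "f j = (if j = i then pt G i - 2 else pt G j)" for j
  define g where "g j = (if j = i then pt G i - 1 else pt G j)" for j
  have "\<exists>p. \<forall>j. pt p j = f j"
  proof (rule exists_part'[of f "len G"])
    fix j show "f (Suc j) \<le> f j"
      using gap pt_Suc_le[of G j] pt_antimono[of j i G] by (auto simp: f_def)
  next
    fix j assume "len G \<le> j" then show "f j = 0" by (simp add: f_def pt_zero)
  qed
  then obtain u where u: "\<forall>j. pt u j = f j" by blast
  have "\<exists>p. \<forall>j. pt p j = g j"
  proof (rule exists_part'[of g "len G"])
    fix j show "g (Suc j) \<le> g j"
      using gap pt_Suc_le[of G j] pt_antimono[of j i G] by (auto simp: g_def)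
  next
    fix j assume "len G \<le> j" then show "g j = 0" by (simp add: g_def pt_zero)
  qed
  then obtain v where v: "\<forall>j. pt v j = g j" by blast
  have "UI u v G"
  proof (rule UI_intro)
    show "\<forall>j. pt u j \<le> pt v j" "\<forall>j. pt v j \<le> pt G j" using u v by (auto simp: f_def g_def)
    show "\<exists>j. pt u j \<noteq> pt v j" using u v gap by (auto simp: f_def g_def intro!: exI[of _ i])
    show "\<exists>j. pt v j \<noteq> pt G j" using v gap by (auto simp: g_def intro!: exI[of _ i])
  next
    fix w assume w1: "\<forall>j. pt u j \<le> pt w j" and w2: "\<forall>j. pt w j \<le> pt G j"
      and w3: "\<exists>j. pt u j \<noteq> pt w j" and w4: "\<exists>j. pt w j \<noteq> pt G j"
    have oth: "pt w j = pt G j" if "j \<noteq> i" for j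
      using w1[rule_format, of j] w2[rule_format, of j] u that by (simp add: f_def)
    have a: "pt w i \<noteq> pt G i - 2" using w3 oth u by (metis f_def)
    have b: "pt w i \<noteq> pt G i" using w4 oth by metis
    have "pt w i = pt G i - 1"
      using a b w1[rule_format, of i] w2[rule_format, of i] u by (simp add: f_def)
    then show "\<forall>j. pt w j = pt v j" using oth v by (simp add: g_def)
  qed
  then have "young_le T u" using DF unfolding DFP_def by blast
  then have "pt T i \<le> pt u i" by (simp add: le_iff)
  moreover have "pt G i \<le> n + 1" using G0 pt_antimono[of 0 i G] by simp
  ultimately show False using T u gap by (simp add: f_def)
qed

lemma no_vdom:
  assumes DF: "DFP G T" and T: "\<forall>i. pt T i = min (pt G i) n" and G0: "pt G 0 \<le> n + 1"
    and eq: "pt G i = pt G (Suc i)" and pos: "1 \<le> pt G (Suc i)"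
  shows "pt G i = n + 1"
proof (rule ccontr)
  assume ne: "pt G i \<noteq> n + 1"
  define c where "c = pt G i"
  have cn: "c \<le> n" using ne G0 pt_antimono[of 0 i G] by (simp add: c_def)
  have c1: "1 \<le> c" using eq pos by (simp add: c_def)
  have ex: "\<exists>j. i \<le> j \<and> pt G (Suc (Suc j)) < c"
  proof (rule exI[of _ "i + len G"])
    have "pt G (Suc (Suc (i + len G))) = 0" by (simp add: pt_zero)
    then show "i \<le> i + len G \<and> pt G (Suc (Suc (i + len G))) < c" using c1 by simp
  qed
  define J where "J = (LEAST j. i \<le> j \<and> pt G (Suc (Suc j)) < c)"
  have J1: "i \<le> J" and J2: "pt G (Suc (Suc J)) < c"
    using LeastI_ex[OF ex] unfolding J_def by auto
  have J3: "c \<le> pt G (Suc J)"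
  proof (cases "J = i")
    case True then show ?thesis using eq by (simp add: c_def)
  next
    case False
    then have "i \<le> J - 1" using J1 by simp
    moreover have "J - 1 < J" using False J1 by simp
    ultimately have "\<not> pt G (Suc (Suc (J - 1))) < c" using not_less_Least[of "J - 1"] unfolding J_def by blast
    then show ?thesis using False J1 by (simp add: not_less Suc_diff_le)
  qed
  have GJ: "pt G J = c" and GJ1: "pt G (Suc J) = c"
    using J3 pt_Suc_le[of G J] pt_antimono[of i J G] pt_antimono[of i "Suc J" G] J1
    by (auto simp: c_def)
  define f where "f j = (if j = J \<or> j = Suc J then c - 1 else pt G j)" for j
  define g where "g j = (if j = Suc J then c - 1 else pt G j)" for j
  have "\<exists>p. \<forall>j. pt p j = f j"
  proof (rule exists_part'[of f "len G"])
    fix j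
    show "f (Suc j) \<le> f j"
    proof (cases "Suc j = J")
      case True then show ?thesis using pt_Suc_le[of G j] GJ by (auto simp: f_def)
    next
      case False then show ?thesis using pt_Suc_le[of G j] J2 by (auto simp: f_def)
    qed
  next
    fix j assume "len G \<le> j"
    then have "pt G j = 0" by (simp add: pt_zero)
    moreover have "j \<noteq> J \<and> j \<noteq> Suc J" using GJ GJ1 c1 \<open>pt G j = 0\<close> by auto
    ultimately show "f j = 0" by (simp add: f_def)
  qed
  then obtain u where u: "\<forall>j. pt u j = f j" by blast
  have "\<exists>p. \<forall>j. pt p j = g j"
  proof (rule exists_part'[of g "len G"])
    fix j
    show "g (Suc j) \<le> g j" using pt_Suc_le[of G j] J2 GJ by (auto simp: g_def)
  next
    fix j assume "len G \<le> j"
    then have "pt G j = 0" by (simp add: pt_zero)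
    moreover have "j \<noteq> Suc J" using GJ1 c1 \<open>pt G j = 0\<close> by auto
    ultimately show "g j = 0" by (simp add: g_def)
  qed
  then obtain v where v: "\<forall>j. pt v j = g j" by blast
  have "UI u v G"
  proof (rule UI_intro)
    show "\<forall>j. pt u j \<le> pt v j" "\<forall>j. pt v j \<le> pt G j" using u v GJ GJ1 by (auto simp: f_def g_def)
    show "\<exists>j. pt u j \<noteq> pt v j" using u v GJ c1 by (auto simp: f_def g_def intro!: exI[of _ J])
    show "\<exists>j. pt v j \<noteq> pt G j" using v GJ1 c1 by (auto simp: g_def intro!: exI[of _ "Suc J"])
  next
    fix w assume w1: "\<forall>j. pt u j \<le> pt w j" and w2: "\<forall>j. pt w j \<le> pt G j"
      and w3: "\<exists>j. pt u j \<noteq> pt w j" and w4: "\<exists>j. pt w j \<noteq> pt G j"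
    have oth: "pt w j = pt G j" if "j \<noteq> J" "j \<noteq> Suc J" for j
      using w1[rule_format, of j] w2[rule_format, of j] u that by (simp add: f_def)
    have bJ: "c - 1 \<le> pt w J" "pt w J \<le> c" using w1[rule_format, of J] w2[rule_format, of J] u GJ
      by (auto simp: f_def)
    have bJ1: "c - 1 \<le> pt w (Suc J)" "pt w (Suc J) \<le> c" using w1[rule_format, of "Suc J"] w2[rule_format, of "Suc J"] u GJ1
      by (auto simp: f_def)
    have mono: "pt w (Suc J) \<le> pt w J" by (rule pt_Suc_le)
    have nu: "pt w J \<noteq> c - 1 \<or> pt w (Suc J) \<noteq> c - 1"
    proof (rule ccontr)
      assume "\<not> ?thesis"
      then have "\<forall>j. pt u j = pt w j" using oth u by (auto simp: f_def)
      then show False using w3 by blast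
    qed
    have nG: "pt w J \<noteq> c \<or> pt w (Suc J) \<noteq> c"
    proof (rule ccontr)
      assume "\<not> ?thesis"
      then have "\<forall>j. pt w j = pt G j" using oth GJ GJ1 by metis
      then show False using w4 by blast
    qed
    have e1: "pt w J = c" and e2: "pt w (Suc J) = c - 1" using nu nG bJ bJ1 mono c1 by auto
    show "\<forall>j. pt w j = pt v j"
    proof
      fix j show "pt w j = pt v j"
      proof (cases "j = J")
        case True then show ?thesis using e1 v GJ by (simp add: g_def)
      next
        case False
        show ?thesis
        proof (cases "j = Suc J")
          case True then show ?thesis using e2 v by (simp add: g_def)
        next
          case False2: False
          then show ?thesis using oth[OF False False2] v by (simp add: g_def)
        qed
      qed
    qed
  qed
  then have "young_le T u" using DF unfolding DFP_def by blast
  then have "pt T J \<le> pt u J" by (simp add: le_iff)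
  then show False using T u GJ cn c1 by (simp add: f_def)
qed




definition shp :: "nat \<Rightarrow> nat \<Rightarrow> nat \<Rightarrow> nat" where
  "shp n a i = (if i < a then n + 1 else n + a - i)"

lemma exists_shp: "\<exists>G. \<forall>i. pt G i = shp n a i"
  by (rule exists_part'[of _ "a + n"]) (auto simp: shp_def)

lemma len_shp: assumes "\<forall>i. pt G i = shp n a i" shows "len G = a + n"
proof -
  have B: "\<forall>i. i < len G \<longleftrightarrow> i < a + n"
  proof
    fix i
    have "0 < pt G i \<longleftrightarrow> i < a + n" using assms by (auto simp: shp_def)
    then show "i < len G \<longleftrightarrow> i < a + n" using pt_pos_iff[of G i] by argo
  qed
  show ?thesis
  proof (rule ccontr)
    assume "len G \<noteq> a + n"
    then show False using B[rule_format, of "min (len G) (a + n)"] by (cases "len G < a + n") auto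
  qed
qed

lemma DFP_shape:
  assumes DF: "DFP G T" and T: "\<forall>i. pt T i = min (pt G i) n" and n1: "1 \<le> n"
    and G0: "n \<le> pt G 0" "pt G 0 \<le> n + 1"
  shows "\<exists>a. \<forall>i. pt G i = shp n a i"
proof -
  have ex: "\<exists>i. pt G i \<le> n" by (rule exI[of _ "len G"]) (simp add: pt_zero)
  define a where "a = (LEAST i. pt G i \<le> n)"
  have lt: "pt G i = n + 1" if "i < a" for i
  proof -
    have "\<not> pt G i \<le> n" using not_less_Least[of i "\<lambda>i. pt G i \<le> n"] that unfolding a_def by blast
    moreover have "pt G i \<le> pt G 0" using pt_antimono by simp
    ultimately show ?thesis using G0 by simp
  qed
  have Ga: "pt G a \<le> n" using LeastI_ex[OF ex] unfolding a_def .
  have Ga': "n \<le> pt G a"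
  proof (cases "a = 0")
    case True then show ?thesis using G0 by simp
  next
    case False
    then have "pt G (a - 1) = n + 1" using lt by simp
    moreover have "pt G (a - 1) \<le> pt G (Suc (a - 1)) + 1" by (rule no_hgap[OF DF T G0(2)])
    ultimately show ?thesis using False by simp
  qed
  have step: "pt G (a + k) = n - k" for k
  proof (induction k)
    case 0 then show ?case using Ga Ga' by simp
  next
    case (Suc k)
    have le: "pt G (a + Suc k) \<le> pt G (a + k)" using pt_Suc_le[of G "a + k"] by simp
    show ?case
    proof (cases "n - k = 0")
      case True then show ?thesis using le Suc by simp
    next
      case False
      have gap: "pt G (a + k) \<le> pt G (Suc (a + k)) + 1" by (rule no_hgap[OF DF T G0(2)])
      have "pt G (a + Suc k) \<noteq> pt G (a + k)"
      proof
        assume eq: "pt G (a + Suc k) = pt G (a + k)"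
        have "pt G (a + k) = n + 1"
          by (rule no_vdom[OF DF T G0(2)]) (use eq Suc False in auto)
        then show False using Suc by simp
      qed
      then show ?thesis using gap le Suc False by simp
    qed
  qed
  have "\<forall>i. pt G i = shp n a i"
  proof
    fix i show "pt G i = shp n a i"
    proof (cases "i < a")
      case True then show ?thesis using lt by (simp add: shp_def)
    next
      case False
      then have "i = a + (i - a)" by simp
      then have "pt G i = n - (i - a)" using step[of "i - a"] by simp
      then show ?thesis using False by (simp add: shp_def)
    qed
  qed
  then show ?thesis by blast
qed

lemma shape_DFP:
  assumes G: "\<forall>i. pt G i = shp n a i" and T: "\<forall>i. pt T i = min (pt G i) n"
  shows "DFP G T"
  unfolding DFP_def
proof (intro allI impI)
  fix u v assume UI: "UI u v G"
  show "young_le T u"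
    using domino[OF UI]
  proof
    assume "\<exists>i. pt u i + 2 = pt G i \<and> (\<forall>j. j \<noteq> i \<longrightarrow> pt u j = pt G j)"
    then obtain i where i: "pt u i + 2 = pt G i" "\<forall>j. j \<noteq> i \<longrightarrow> pt u j = pt G j" by blast
    have "pt u (Suc i) \<le> pt u i" by (rule pt_Suc_le)
    then have "shp n a (Suc i) + 2 \<le> shp n a i" using i G by simp
    then show ?thesis by (auto simp: shp_def split: if_splits)
  next
    assume "\<exists>i. pt G i = pt G (Suc i) \<and> pt u i + 1 = pt G i \<and> pt u (Suc i) + 1 = pt G (Suc i) \<and>
              (\<forall>j. j \<noteq> i \<and> j \<noteq> Suc i \<longrightarrow> pt u j = pt G j)"
    then obtain i where i: "pt G i = pt G (Suc i)" "pt u i + 1 = pt G i" "pt u (Suc i) + 1 = pt G (Suc i)"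
      "\<forall>j. j \<noteq> i \<and> j \<noteq> Suc i \<longrightarrow> pt u j = pt G j" by blast
    have "shp n a i = shp n a (Suc i)" "1 \<le> shp n a (Suc i)" using i G by auto
    then have "Suc i < a" by (auto simp: shp_def split: if_splits)
    then have ui: "pt u i = n" "pt u (Suc i) = n" using i G by (auto simp: shp_def)
    show "young_le T u" unfolding le_iff
    proof
      fix j show "pt T j \<le> pt u j"
        using T ui i(4)[rule_format, of j] by (cases "j = i \<or> j = Suc i") auto
    qed
  qed
qed

lemma count_lemma:
  assumes r: "1 \<le> r" and n: "1 \<le> n" and a: "\<forall>m. m < a \<longleftrightarrow> r + 1 \<le> pt P m"
  shows "mult_part r P = n \<longleftrightarrow> (r \<le> pt P (a + n - 1) \<and> pt P (a + n) < r)"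
proof -
  have ex: "\<exists>i. pt P i < r" by (rule exI[of _ "len P"]) (use r in \<open>simp add: pt_zero\<close>)
  define c where "c = (LEAST i. pt P i < r)"
  have ge: "r \<le> pt P i" if "i < c" for i
    using not_less_Least[of i "\<lambda>i. pt P i < r"] that unfolding c_def by simp
  have Pc: "pt P c < r" using LeastI_ex[OF ex] unfolding c_def .
  have lt: "pt P i < r" if "c \<le> i" for i using pt_antimono[OF that, of P] Pc by simp
  have ac: "a \<le> c"
  proof (rule ccontr)
    assume "\<not> a \<le> c"
    then have "c < a" by simp
    then have "r + 1 \<le> pt P c" using a by blast
    then show False using Pc by simp
  qed
  have S: "{i. i < len P \<and> pt P i = r} = {a..<c}"
  proof (rule set_eqI)
    fix i
    have A1: "i < a \<longleftrightarrow> r + 1 \<le> pt P i" using a by blast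
    have A2: "i < c \<longleftrightarrow> r \<le> pt P i" using ge[of i] lt[of i] by (cases "i < c") auto
    have A3: "pt P i = r \<longrightarrow> i < len P"
    proof
      assume "pt P i = r" then have "0 < pt P i" using r by simp
      then show "i < len P" using pt_pos_iff by blast
    qed
    show "i \<in> {i. i < len P \<and> pt P i = r} \<longleftrightarrow> i \<in> {a..<c}"
      using A1 A2 A3 by auto
  qed
  have card: "mult_part r P = c - a" unfolding mult_part_card S by simp
  have B1: "r \<le> pt P (a + n - 1) \<longleftrightarrow> a + n - 1 < c"
    using ge[of "a + n - 1"] lt[of "a + n - 1"] by (cases "a + n - 1 < c") auto
  have B2: "pt P (a + n) < r \<longleftrightarrow> c \<le> a + n"
    using ge[of "a + n"] lt[of "a + n"] by (cases "a + n < c") auto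
  have B3: "c - a = n \<longleftrightarrow> (a + n - 1 < c \<and> c \<le> a + n)" using ac n by arith
  show ?thesis unfolding card B1 B2 B3 ..
qed

lemma exists_a: "\<exists>a. \<forall>m. m < a \<longleftrightarrow> r + 1 \<le> pt P m"
proof -
  have ex: "\<exists>i. pt P i < r + 1" by (rule exI[of _ "len P"]) (simp add: pt_zero)
  define a where "a = (LEAST i. pt P i < r + 1)"
  have ge: "r + 1 \<le> pt P i" if "i < a" for i
    using not_less_Least[of i "\<lambda>i. pt P i < r + 1"] that unfolding a_def by simp
  have Pa: "pt P a < r + 1" using LeastI_ex[OF ex] unfolding a_def .
  have "\<forall>m. m < a \<longleftrightarrow> r + 1 \<le> pt P m"
  proof
    fix m show "m < a \<longleftrightarrow> r + 1 \<le> pt P m"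
      using ge[of m] pt_antimono[of a m P] Pa by (cases "m < a") auto
  qed
  then show ?thesis by blast
qed




definition PHI' where
  "PHI' \<rho> \<sigma> \<pi> \<longleftrightarrow> isrow \<rho> \<and> (\<exists>y. \<not> young_le \<rho> y) \<and> isrow \<sigma> \<and> (\<exists>y. \<not> young_le \<sigma> y) \<and>
    (\<forall>\<rho>1 \<rho>2 \<sigma>1 \<sigma>2 D G T. NextP \<rho> \<rho>1 \<and> NextP \<rho>1 \<rho>2 \<and> NextP \<sigma> \<sigma>1 \<and> NextP \<sigma>1 \<sigma>2 \<and> IsD2 D \<and>
       TruncP G \<sigma>1 T \<and> young_le \<sigma> G \<and> \<not> young_le \<sigma>2 G \<and> DFP G T \<and> EqAP D G \<sigma>2 \<pi> \<rho>2 \<longrightarrow>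
       (\<exists>K1 K2. QP D G K1 K2 \<rho>1 \<pi>))"

definition Rel where
  "Rel \<rho> \<sigma> \<pi> \<longleftrightarrow> (\<exists>n r. 1 \<le> n \<and> 1 \<le> r \<and> \<sigma> = single n \<and> \<rho> = single r \<and> mult_part r \<pi> = n)"

lemma row_single: "1 \<le> r \<Longrightarrow> isrow (single r) \<and> pt (single r) 0 = r"
  using single_iff[of "single r"] by (auto simp: pt_single)

lemma PHI'_iff: "PHI' \<rho> \<sigma> \<pi> \<longleftrightarrow> Rel \<rho> \<sigma> \<pi>"
proof
  assume P: "PHI' \<rho> \<sigma> \<pi>"
  obtain r where r: "1 \<le> r" "\<rho> = single r" using P single_iff[of \<rho>] by (auto simp: PHI'_def)
  obtain n where n: "1 \<le> n" "\<sigma> = single n" using P single_iff[of \<sigma>] by (auto simp: PHI'_def)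
  have rr: "isrow \<rho>" "pt \<rho> 0 = r" and nn: "isrow \<sigma>" "pt \<sigma> 0 = n" using row_single r n by auto
  obtain \<rho>1 where \<rho>1: "isrow \<rho>1" "pt \<rho>1 0 = r + 1" using mkrow by blast
  obtain \<rho>2 where \<rho>2: "isrow \<rho>2" "pt \<rho>2 0 = r + 2" using mkrow by blast
  obtain \<sigma>1 where \<sigma>1: "isrow \<sigma>1" "pt \<sigma>1 0 = n + 1" using mkrow by blast
  obtain \<sigma>2 where \<sigma>2: "isrow \<sigma>2" "pt \<sigma>2 0 = n + 2" using mkrow by blast
  obtain D where D: "isrow D" "pt D 0 = 2" using mkrow by blast
  obtain a where a: "\<forall>m. m < a \<longleftrightarrow> r + 1 \<le> pt \<pi> m" using exists_a by blast
  obtain G where G: "\<forall>i. pt G i = shp n a i" using exists_shp by blast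
  obtain T where T: "\<forall>i. pt T i = min (pt G i) n"
    using exists_part'[of "\<lambda>i. min (pt G i) n" "len G"] pt_Suc_le[of G] pt_zero[of G]
    by (metis min.mono order_refl min_0L)
  have h1: "NextP \<rho> \<rho>1" "NextP \<rho>1 \<rho>2" "NextP \<sigma> \<sigma>1" "NextP \<sigma>1 \<sigma>2"
    using NextP_iff rr \<rho>1 \<rho>2 nn \<sigma>1 \<sigma>2 by auto
  have h2: "IsD2 D" using IsD2_iff D by simp
  have h3: "TruncP G \<sigma>1 T" using TruncP_iff[of \<sigma>1 G T] \<sigma>1 T by simp
  have h4: "young_le \<sigma> G" "\<not> young_le \<sigma>2 G" using row_le nn \<sigma>2 G by (auto simp: shp_def)
  have h5: "DFP G T" using shape_DFP[OF G T] .
  have sh: "n + 1 \<le> pt G m \<longleftrightarrow> m < a" for m using G by (auto simp: shp_def)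
  have h6: "EqAP D G \<sigma>2 \<pi> \<rho>2" using EqAP_iff[OF h2 \<sigma>2 \<rho>2] sh a by simp
  have "\<exists>K1 K2. QP D G K1 K2 \<rho>1 \<pi>" using P h1 h2 h3 h4 h5 h6 unfolding PHI'_def by blast
  then have q: "(1 \<le> len G \<longrightarrow> r \<le> pt \<pi> (len G - 1)) \<and> pt \<pi> (len G) < r"
    using QP_iff[OF h2 \<rho>1 r(1)] by blast
  have lG: "len G = a + n" using len_shp[OF G] .
  have "mult_part r \<pi> = n" using count_lemma[OF r(1) n(1) a] q lG n by simp
  then show "Rel \<rho> \<sigma> \<pi>" unfolding Rel_def using r n by blast
next
  assume "Rel \<rho> \<sigma> \<pi>"
  then obtain n r where nr: "1 \<le> n" "1 \<le> r" "\<sigma> = single n" "\<rho> = single r" "mult_part r \<pi> = n"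
    unfolding Rel_def by blast
  have rr: "isrow \<rho>" "pt \<rho> 0 = r" and nn: "isrow \<sigma>" "pt \<sigma> 0 = n" using row_single nr by auto
  have base: "isrow \<rho> \<and> (\<exists>y. \<not> young_le \<rho> y) \<and> isrow \<sigma> \<and> (\<exists>y. \<not> young_le \<sigma> y)"
    using single_iff nr by blast
  have main: "\<exists>K1 K2. QP D G K1 K2 \<rho>1 \<pi>"
    if H: "NextP \<rho> \<rho>1" "NextP \<rho>1 \<rho>2" "NextP \<sigma> \<sigma>1" "NextP \<sigma>1 \<sigma>2" "IsD2 D"
       "TruncP G \<sigma>1 T" "young_le \<sigma> G" "\<not> young_le \<sigma>2 G" "DFP G T" "EqAP D G \<sigma>2 \<pi> \<rho>2"
    for \<rho>1 \<rho>2 \<sigma>1 \<sigma>2 D G T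
  proof -
    have \<rho>1: "isrow \<rho>1" "pt \<rho>1 0 = r + 1" using NextP_iff[OF rr(1)] H(1) rr by auto
    have \<rho>2: "isrow \<rho>2" "pt \<rho>2 0 = r + 2" using NextP_iff[OF \<rho>1(1)] H(2) \<rho>1 by auto
    have \<sigma>1: "isrow \<sigma>1" "pt \<sigma>1 0 = n + 1" using NextP_iff[OF nn(1)] H(3) nn by auto
    have \<sigma>2: "isrow \<sigma>2" "pt \<sigma>2 0 = n + 2" using NextP_iff[OF \<sigma>1(1)] H(4) \<sigma>1 by auto
    have T: "\<forall>i. pt T i = min (pt G i) n" using TruncP_iff[OF \<sigma>1(1)] \<sigma>1 H(6) by simp
    have G0: "n \<le> pt G 0" "pt G 0 \<le> n + 1" using H(7,8) row_le[OF nn(1)] row_le[OF \<sigma>2(1)] nn \<sigma>2 by auto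
    obtain a where G: "\<forall>i. pt G i = shp n a i" using DFP_shape[OF H(9) T nr(1) G0] by blast
    have sh: "n + 1 \<le> pt G m \<longleftrightarrow> m < a" for m using G by (auto simp: shp_def)
    have a: "\<forall>m. m < a \<longleftrightarrow> r + 1 \<le> pt \<pi> m" using EqAP_iff[OF H(5) \<sigma>2 \<rho>2] H(10) sh by simp
    have lG: "len G = a + n" using len_shp[OF G] .
    have q: "r \<le> pt \<pi> (a + n - 1) \<and> pt \<pi> (a + n) < r" using count_lemma[OF nr(2) nr(1) a] nr(5) by simp
    show ?thesis using QP_iff[OF H(5) \<rho>1 nr(2)] q lG by simp
  qed
  show "PHI' \<rho> \<sigma> \<pi>" unfolding PHI'_def using base main by blast
qed




definition NN where
  "NN t t' z \<longleftrightarrow> \<not> isrow t' \<or> \<not> (young_le t t' \<and> t \<noteq> t') \<or> (isrow z \<and> young_le t z \<and> t \<noteq> z \<and> \<not> young_le t' z)"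
definition ND where
  "ND d z \<longleftrightarrow> \<not> isrow d \<or> young_le d one_one \<or> (isrow z \<and> \<not> young_le z one_one \<and> \<not> young_le d z)"
definition NT where
  "NT G th T w \<longleftrightarrow> \<not> young_le T G \<or> young_le th T \<or> (young_le w G \<and> \<not> young_le w T \<and> \<not> young_le th w)"
definition NDFm where
  "NDFm u v G T w \<longleftrightarrow> young_le u v \<and> u \<noteq> v \<and> young_le v G \<and> v \<noteq> G \<and>
     ((young_le u w \<and> u \<noteq> w \<and> young_le w G \<and> w \<noteq> G) \<longrightarrow> w = v) \<and> \<not> young_le T u"
definition BB where
  "BB K th P w \<longleftrightarrow> ((\<not> young_le th w \<and> \<not> young_le K w) \<longrightarrow> young_le w P)"
definition NEm where
  "NEm D K G P s2 r2 wE wB1 wB2 \<longleftrightarrow> \<not> young_le D K \<and>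
     ((BB K s2 G wB1 \<and> \<not> BB K r2 P wE) \<or> (\<not> BB K s2 G wE \<and> BB K r2 P wB2))"
definition Qm where
  "Qm D G K1 K2 r1 P wQ zz1 zz2 wQ1 \<longleftrightarrow> \<not> young_le D K1 \<and> \<not> young_le K1 G \<and>
     ((\<not> young_le D zz1 \<and> young_le zz1 K1 \<and> zz1 \<noteq> K1) \<longrightarrow> young_le zz1 G) \<and>
     \<not> young_le D K2 \<and> young_le K1 K2 \<and> K1 \<noteq> K2 \<and>
     ((\<not> young_le D zz2 \<and> young_le zz2 K2 \<and> zz2 \<noteq> K2) \<longrightarrow> young_le zz2 K1) \<and>
     BB K1 r1 P wQ1 \<and> \<not> BB K2 r1 P wQ"

lemma L1: "\<not> NextP t t' \<longleftrightarrow> (\<exists>z. NN t t' z)" unfolding NextP_def NN_def by blast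
lemma L2: "\<not> IsD2 d \<longleftrightarrow> (\<exists>z. ND d z)" unfolding IsD2_def ND_def isrow_def by blast
lemma L3: "\<not> TruncP G th T \<longleftrightarrow> (\<exists>w. NT G th T w)" unfolding TruncP_def NT_def by blast
lemma L4: "\<not> DFP G T \<longleftrightarrow> (\<exists>u v. \<forall>w. NDFm u v G T w)" unfolding DFP_def NDFm_def UI_def by blast
lemma BoxBB: "BoxP K th P \<longleftrightarrow> (\<forall>w. BB K th P w)" unfolding BoxP_def BB_def by blast

lemma L5: "\<not> EqAP D G s2 P r2 \<longleftrightarrow> (\<exists>K wE. \<forall>wB1 wB2. NEm D K G P s2 r2 wE wB1 wB2)"
proof
  assume "\<not> EqAP D G s2 P r2"
  then obtain K where K: "\<not> young_le D K" "\<not> (BoxP K s2 G \<longleftrightarrow> BoxP K r2 P)" unfolding EqAP_def by blast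
  show "\<exists>K wE. \<forall>wB1 wB2. NEm D K G P s2 r2 wE wB1 wB2"
  proof (cases "BoxP K s2 G")
    case True
    then obtain wE where "\<not> BB K r2 P wE" using K BoxBB by blast
    then show ?thesis using True K BoxBB unfolding NEm_def by blast
  next
    case False
    then obtain wE where "\<not> BB K s2 G wE" using BoxBB by blast
    then show ?thesis using False K BoxBB unfolding NEm_def by blast
  qed
next
  assume "\<exists>K wE. \<forall>wB1 wB2. NEm D K G P s2 r2 wE wB1 wB2"
  then obtain K wE where N: "\<forall>wB1 wB2. NEm D K G P s2 r2 wE wB1 wB2" by blast
  show "\<not> EqAP D G s2 P r2"
  proof
    assume E: "EqAP D G s2 P r2"
    have col: "\<not> young_le D K" using N unfolding NEm_def by blast
    then have eq: "BoxP K s2 G \<longleftrightarrow> BoxP K r2 P" using E unfolding EqAP_def by blast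
    show False
    proof (cases "BoxP K s2 G")
      case True
      then have "BB K r2 P wE" "BB K s2 G wE" using eq BoxBB by blast+
      then show False using N unfolding NEm_def by blast
    next
      case False
      then obtain w1 where w1: "\<not> BB K s2 G w1" using BoxBB by blast
      obtain w2 where w2: "\<not> BB K r2 P w2" using False eq BoxBB by blast
      show False using N[rule_format, of w1 w2] w1 w2 unfolding NEm_def by blast
    qed
  qed
qed

lemma L6: "(\<exists>K1 K2. QP D G K1 K2 r1 P) \<longleftrightarrow> (\<exists>K1 K2 wQ. \<forall>zz1 zz2 wQ1. Qm D G K1 K2 r1 P wQ zz1 zz2 wQ1)"
  unfolding QP_def Qm_def BoxBB by blast

definition Mat where
  "Mat \<rho> \<sigma> \<pi> \<rho>1 \<rho>2 \<sigma>1 \<sigma>2 D G T y1 y2 z1 z2 z3 z4 z5 wT u v K wE K1 K2 wQ zz1 zz2 wDF wB1 wB2 wQ1 \<longleftrightarrow>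
     isrow \<rho> \<and> \<not> young_le \<rho> y1 \<and> isrow \<sigma> \<and> \<not> young_le \<sigma> y2 \<and>
     (NN \<rho> \<rho>1 z1 \<or> NN \<rho>1 \<rho>2 z2 \<or> NN \<sigma> \<sigma>1 z3 \<or> NN \<sigma>1 \<sigma>2 z4 \<or> ND D z5 \<or> NT G \<sigma>1 T wT \<or>
      \<not> young_le \<sigma> G \<or> young_le \<sigma>2 G \<or> NDFm u v G T wDF \<or> NEm D K G \<pi> \<sigma>2 \<rho>2 wE wB1 wB2 \<or>
      Qm D G K1 K2 \<rho>1 \<pi> wQ zz1 zz2 wQ1)"

definition PHI where
  "PHI \<rho> \<sigma> \<pi> \<longleftrightarrow> (\<forall>\<rho>1 \<rho>2 \<sigma>1 \<sigma>2 D G T. \<exists>y1 y2 z1 z2 z3 z4 z5 wT u v K wE K1 K2 wQ.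
     \<forall>zz1 zz2 wDF wB1 wB2 wQ1.
     Mat \<rho> \<sigma> \<pi> \<rho>1 \<rho>2 \<sigma>1 \<sigma>2 D G T y1 y2 z1 z2 z3 z4 z5 wT u v K wE K1 K2 wQ zz1 zz2 wDF wB1 wB2 wQ1)"

lemma PHI_iff: "PHI \<rho> \<sigma> \<pi> \<longleftrightarrow> PHI' \<rho> \<sigma> \<pi>"
proof
  assume P: "PHI \<rho> \<sigma> \<pi>"
  have base: "isrow \<rho> \<and> (\<exists>y. \<not> young_le \<rho> y) \<and> isrow \<sigma> \<and> (\<exists>y. \<not> young_le \<sigma> y)"
  proof -
    obtain y1 y2 z1 z2 z3 z4 z5 wT u v K wE K1 K2 wQ where
      "\<forall>zz1 zz2 wDF wB1 wB2 wQ1. Mat \<rho> \<sigma> \<pi> \<rho> \<rho> \<rho> \<rho> \<rho> \<rho> \<rho> y1 y2 z1 z2 z3 z4 z5 wT u v K wE K1 K2 wQ zz1 zz2 wDF wB1 wB2 wQ1"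
      using P unfolding PHI_def
      apply -
      apply (drule spec[of _ \<rho>])+
      apply (elim exE)
      apply (rule that)
      apply assumption
      done
    then show ?thesis unfolding Mat_def by blast
  qed
  have main: "\<exists>K1 K2. QP D G K1 K2 \<rho>1 \<pi>"
    if H: "NextP \<rho> \<rho>1" "NextP \<rho>1 \<rho>2" "NextP \<sigma> \<sigma>1" "NextP \<sigma>1 \<sigma>2" "IsD2 D"
       "TruncP G \<sigma>1 T" "young_le \<sigma> G" "\<not> young_le \<sigma>2 G" "DFP G T" "EqAP D G \<sigma>2 \<pi> \<rho>2"
    for \<rho>1 \<rho>2 \<sigma>1 \<sigma>2 D G T
  proof -
    obtain y1 y2 z1 z2 z3 z4 z5 wT u v K wE K1 K2 wQ where M:
      "\<forall>zz1 zz2 wDF wB1 wB2 wQ1. Mat \<rho> \<sigma> \<pi> \<rho>1 \<rho>2 \<sigma>1 \<sigma>2 D G T y1 y2 z1 z2 z3 z4 z5 wT u v K wE K1 K2 wQ zz1 zz2 wDF wB1 wB2 wQ1"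
      using P unfolding PHI_def
      apply -
      apply (drule spec[of _ \<rho>1], drule spec[of _ \<rho>2], drule spec[of _ \<sigma>1], drule spec[of _ \<sigma>2],
             drule spec[of _ D], drule spec[of _ G], drule spec[of _ T])
      apply (elim exE)
      apply (rule that)
      apply assumption
      done
    have n1: "\<not> NN \<rho> \<rho>1 z1" "\<not> NN \<rho>1 \<rho>2 z2" "\<not> NN \<sigma> \<sigma>1 z3" "\<not> NN \<sigma>1 \<sigma>2 z4"
      using H(1-4) L1 by blast+
    have n2: "\<not> ND D z5" using H(5) L2 by blast
    have n3: "\<not> NT G \<sigma>1 T wT" using H(6) L3 by blast
    obtain w0 where n4: "\<not> NDFm u v G T w0" using H(9) L4 by blast
    obtain b1 b2 where n5: "\<not> NEm D K G \<pi> \<sigma>2 \<rho>2 wE b1 b2" using H(10) L5 by blast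
    have "\<forall>zz1 zz2 wQ1. Qm D G K1 K2 \<rho>1 \<pi> wQ zz1 zz2 wQ1"
    proof (intro allI)
      fix zz1 zz2 wQ1
      show "Qm D G K1 K2 \<rho>1 \<pi> wQ zz1 zz2 wQ1"
        using M[rule_format, of zz1 zz2 w0 b1 b2 wQ1] n1 n2 n3 n4 n5 H(7,8) unfolding Mat_def by blast
    qed
    then show ?thesis using L6 by blast
  qed
  show "PHI' \<rho> \<sigma> \<pi>" unfolding PHI'_def using base main by blast
next
  assume P: "PHI' \<rho> \<sigma> \<pi>"
  then have base: "isrow \<rho>" "\<exists>y. \<not> young_le \<rho> y" "isrow \<sigma>" "\<exists>y. \<not> young_le \<sigma> y" unfolding PHI'_def by blast+
  obtain y1 y2 where y: "\<not> young_le \<rho> y1" "\<not> young_le \<sigma> y2" using base by blast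
  show "PHI \<rho> \<sigma> \<pi>" unfolding PHI_def
  proof (intro allI)
    fix \<rho>1 \<rho>2 \<sigma>1 \<sigma>2 D G T
    define z1 where "z1 = (SOME z. NN \<rho> \<rho>1 z)"
    define z2 where "z2 = (SOME z. NN \<rho>1 \<rho>2 z)"
    define z3 where "z3 = (SOME z. NN \<sigma> \<sigma>1 z)"
    define z4 where "z4 = (SOME z. NN \<sigma>1 \<sigma>2 z)"
    define z5 where "z5 = (SOME z. ND D z)"
    define wT where "wT = (SOME w. NT G \<sigma>1 T w)"
    define uv where "uv = (SOME p. \<forall>w. NDFm (fst p) (snd p) G T w)"
    define KE where "KE = (SOME p. \<forall>wB1 wB2. NEm D (fst p) G \<pi> \<sigma>2 \<rho>2 (snd p) wB1 wB2)"
    define KQ where "KQ = (SOME p. \<forall>zz1 zz2 wQ1. Qm D G (fst p) (fst (snd p)) \<rho>1 \<pi> (snd (snd p)) zz1 zz2 wQ1)"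
    have c1: "\<not> NextP \<rho> \<rho>1 \<Longrightarrow> NN \<rho> \<rho>1 z1" using L1 someI_ex unfolding z1_def by metis
    have c2: "\<not> NextP \<rho>1 \<rho>2 \<Longrightarrow> NN \<rho>1 \<rho>2 z2" using L1 someI_ex unfolding z2_def by metis
    have c3: "\<not> NextP \<sigma> \<sigma>1 \<Longrightarrow> NN \<sigma> \<sigma>1 z3" using L1 someI_ex unfolding z3_def by metis
    have c4: "\<not> NextP \<sigma>1 \<sigma>2 \<Longrightarrow> NN \<sigma>1 \<sigma>2 z4" using L1 someI_ex unfolding z4_def by metis
    have c5: "\<not> IsD2 D \<Longrightarrow> ND D z5" using L2 someI_ex unfolding z5_def by metis
    have c6: "\<not> TruncP G \<sigma>1 T \<Longrightarrow> NT G \<sigma>1 T wT" using L3 someI_ex unfolding wT_def by metis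
    have c7: "\<forall>w. NDFm (fst uv) (snd uv) G T w" if "\<not> DFP G T"
    proof -
      have "\<exists>p. \<forall>w. NDFm (fst p) (snd p) G T w" using that L4 by auto
      then show ?thesis unfolding uv_def by (rule someI_ex)
    qed
    have c8: "\<forall>wB1 wB2. NEm D (fst KE) G \<pi> \<sigma>2 \<rho>2 (snd KE) wB1 wB2" if "\<not> EqAP D G \<sigma>2 \<pi> \<rho>2"
    proof -
      have "\<exists>p. \<forall>wB1 wB2. NEm D (fst p) G \<pi> \<sigma>2 \<rho>2 (snd p) wB1 wB2" using that L5 by auto
      then show ?thesis unfolding KE_def by (rule someI_ex)
    qed
    have c9: "\<forall>zz1 zz2 wQ1. Qm D G (fst KQ) (fst (snd KQ)) \<rho>1 \<pi> (snd (snd KQ)) zz1 zz2 wQ1"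
      if "\<exists>K1 K2. QP D G K1 K2 \<rho>1 \<pi>"
    proof -
      have "\<exists>p. \<forall>zz1 zz2 wQ1. Qm D G (fst p) (fst (snd p)) \<rho>1 \<pi> (snd (snd p)) zz1 zz2 wQ1"
        using that L6 by auto
      then show ?thesis unfolding KQ_def by (rule someI_ex)
    qed
    have hyp: "NextP \<rho> \<rho>1 \<and> NextP \<rho>1 \<rho>2 \<and> NextP \<sigma> \<sigma>1 \<and> NextP \<sigma>1 \<sigma>2 \<and> IsD2 D \<and>
       TruncP G \<sigma>1 T \<and> young_le \<sigma> G \<and> \<not> young_le \<sigma>2 G \<and> DFP G T \<and> EqAP D G \<sigma>2 \<pi> \<rho>2 \<longrightarrow>
       (\<exists>K1 K2. QP D G K1 K2 \<rho>1 \<pi>)" using P unfolding PHI'_def by blast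
    have "\<forall>zz1 zz2 wDF wB1 wB2 wQ1. Mat \<rho> \<sigma> \<pi> \<rho>1 \<rho>2 \<sigma>1 \<sigma>2 D G T y1 y2 z1 z2 z3 z4 z5 wT (fst uv) (snd uv)
       (fst KE) (snd KE) (fst KQ) (fst (snd KQ)) (snd (snd KQ)) zz1 zz2 wDF wB1 wB2 wQ1"
    proof (intro allI)
      fix zz1 zz2 wDF wB1 wB2 wQ1
      show "Mat \<rho> \<sigma> \<pi> \<rho>1 \<rho>2 \<sigma>1 \<sigma>2 D G T y1 y2 z1 z2 z3 z4 z5 wT (fst uv) (snd uv)
       (fst KE) (snd KE) (fst KQ) (fst (snd KQ)) (snd (snd KQ)) zz1 zz2 wDF wB1 wB2 wQ1"
        unfolding Mat_def
      proof (intro conjI)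
        show "isrow \<rho>" "\<not> young_le \<rho> y1" "isrow \<sigma>" "\<not> young_le \<sigma> y2" using base y by auto
        show "NN \<rho> \<rho>1 z1 \<or> NN \<rho>1 \<rho>2 z2 \<or> NN \<sigma> \<sigma>1 z3 \<or> NN \<sigma>1 \<sigma>2 z4 \<or> ND D z5 \<or> NT G \<sigma>1 T wT \<or>
          \<not> young_le \<sigma> G \<or> young_le \<sigma>2 G \<or> NDFm (fst uv) (snd uv) G T wDF \<or>
          NEm D (fst KE) G \<pi> \<sigma>2 \<rho>2 (snd KE) wB1 wB2 \<or>
          Qm D G (fst KQ) (fst (snd KQ)) \<rho>1 \<pi> (snd (snd KQ)) zz1 zz2 wQ1"
          using hyp c1 c2 c3 c4 c5 c6 c7 c8 c9 by blast
      qed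
    qed
    then show "\<exists>y1 y2 z1 z2 z3 z4 z5 wT u v K wE K1 K2 wQ. \<forall>zz1 zz2 wDF wB1 wB2 wQ1.
       Mat \<rho> \<sigma> \<pi> \<rho>1 \<rho>2 \<sigma>1 \<sigma>2 D G T y1 y2 z1 z2 z3 z4 z5 wT u v K wE K1 K2 wQ zz1 zz2 wDF wB1 wB2 wQ1"
      by blast
  qed
qed




definition fle :: "nat \<Rightarrow> nat \<Rightarrow> fm" where "fle x y = Le (V x) (V y)"
definition fneq :: "nat \<Rightarrow> nat \<Rightarrow> fm" where "fneq x y = Neg (Eq (V x) (V y))"
definition frow :: "nat \<Rightarrow> fm" where "frow x = Neg (Le C (V x))"
definition fimp :: "fm \<Rightarrow> fm \<Rightarrow> fm" where "fimp a b = Disj (Neg a) b"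

lemma sat_basic [simp]:
  "sat (fle x y) e = young_le (e x) (e y)"
  "sat (fneq x y) e = (e x \<noteq> e y)"
  "sat (frow x) e = isrow (e x)"
  "sat (fimp a b) e = (sat a e \<longrightarrow> sat b e)"
  "qf (fle x y)" "qf (fneq x y)" "qf (frow x)" "qf (fimp a b) = (qf a \<and> qf b)"
  by (auto simp: fle_def fneq_def frow_def fimp_def isrow_def)

definition fNN where
  "fNN t t' z = Disj (Neg (frow t')) (Disj (Neg (Conj (fle t t') (fneq t t')))
      (Conj (frow z) (Conj (fle t z) (Conj (fneq t z) (Neg (fle t' z))))))"
definition fND where
  "fND d z = Disj (Neg (frow d)) (Disj (Le (V d) C) (Conj (frow z) (Conj (Neg (Le (V z) C)) (Neg (fle d z)))))"
definition fNT where
  "fNT g th t w = Disj (Neg (fle t g)) (Disj (fle th t) (Conj (fle w g) (Conj (Neg (fle w t)) (Neg (fle th w)))))"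
definition fNDF where
  "fNDF u v g t w = Conj (fle u v) (Conj (fneq u v) (Conj (fle v g) (Conj (fneq v g)
     (Conj (fimp (Conj (fle u w) (Conj (fneq u w) (Conj (fle w g) (fneq w g)))) (Eq (V w) (V v)))
       (Neg (fle t u))))))"
definition fBB where
  "fBB k th p w = fimp (Conj (Neg (fle th w)) (Neg (fle k w))) (fle w p)"
definition fNE where
  "fNE d k g p s2 r2 wE wB1 wB2 = Conj (Neg (fle d k))
     (Disj (Conj (fBB k s2 g wB1) (Neg (fBB k r2 p wE))) (Conj (Neg (fBB k s2 g wE)) (fBB k r2 p wB2)))"
definition fQ where
  "fQ d g k1 k2 r1 p wQ zz1 zz2 wQ1 = Conj (Neg (fle d k1)) (Conj (Neg (fle k1 g))
     (Conj (fimp (Conj (Neg (fle d zz1)) (Conj (fle zz1 k1) (fneq zz1 k1))) (fle zz1 g))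
     (Conj (Neg (fle d k2)) (Conj (fle k1 k2) (Conj (fneq k1 k2)
     (Conj (fimp (Conj (Neg (fle d zz2)) (Conj (fle zz2 k2) (fneq zz2 k2))) (fle zz2 k1))
     (Conj (fBB k1 r1 p wQ1) (Neg (fBB k2 r1 p wQ)))))))))"

lemma sat_comp [simp]:
  "sat (fNN t t' z) e = NN (e t) (e t') (e z)"
  "sat (fND d z) e = ND (e d) (e z)"
  "sat (fNT g th t w) e = NT (e g) (e th) (e t) (e w)"
  "sat (fNDF u v g t w) e = NDFm (e u) (e v) (e g) (e t) (e w)"
  "sat (fBB k th p w) e = BB (e k) (e th) (e p) (e w)"
  "sat (fNE d k g p s2 r2 wE wB1 wB2) e = NEm (e d) (e k) (e g) (e p) (e s2) (e r2) (e wE) (e wB1) (e wB2)"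
  "sat (fQ d g k1 k2 r1 p wQ zz1 zz2 wQ1) e = Qm (e d) (e g) (e k1) (e k2) (e r1) (e p) (e wQ) (e zz1) (e zz2) (e wQ1)"
  by (auto simp: fNN_def NN_def fND_def ND_def fNT_def NT_def fNDF_def NDFm_def fBB_def BB_def
     fNE_def NEm_def fQ_def Qm_def isrow_def)

lemma qf_comp [simp]:
  "qf (fNN t t' z)" "qf (fND d z)" "qf (fNT g th t w)" "qf (fNDF u v g t w)" "qf (fBB k th p w)"
  "qf (fNE d k g p s2 r2 wE wB1 wB2)" "qf (fQ d g k1 k2 r1 p wQ zz1 zz2 wQ1)"
  by (auto simp: fNN_def fND_def fNT_def fNDF_def fBB_def fNE_def fQ_def)

definition fMat where
  "fMat = Conj (frow 0) (Conj (Neg (fle 0 10)) (Conj (frow 1) (Conj (Neg (fle 1 11))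
     (Disj (fNN 0 3 12) (Disj (fNN 3 4 13) (Disj (fNN 1 5 14) (Disj (fNN 5 6 15) (Disj (fND 7 16)
     (Disj (fNT 8 5 9 17) (Disj (Neg (fle 1 8)) (Disj (fle 6 8) (Disj (fNDF 18 19 8 9 27)
     (Disj (fNE 7 20 8 2 6 4 21 28 29) (fQ 7 8 22 23 3 2 24 25 26 30))))))))))))))"

definition theF where
  "theF = allblock [3,4,5,6,7,8,9] (exblock [10,11,12,13,14,15,16,17,18,19,20,21,22,23,24]
     (allblock [25,26,27,28,29,30] fMat))"

lemma qf_fMat: "qf fMat" by (simp add: fMat_def)

lemma isPiS: "is_Pi (Suc n) f \<longleftrightarrow> (\<exists>xs g. f = allblock xs g \<and> is_Sigma n g)" by simp
lemma isSigmaS: "is_Sigma (Suc n) f \<longleftrightarrow> (\<exists>xs g. f = exblock xs g \<and> is_Pi n g)" by simp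

lemma is_Pi_theF: "is_Pi 3 theF"
proof -
  have s0: "is_Sigma 0 fMat" using qf_fMat by simp
  have p1: "is_Pi (Suc 0) (allblock [25,26,27,28,29,30] fMat)"
    unfolding isPiS using s0 by blast
  have s2: "is_Sigma (Suc (Suc 0)) (exblock [10,11,12,13,14,15,16,17,18,19,20,21,22,23,24] (allblock [25,26,27,28,29,30] fMat))"
    unfolding isSigmaS using p1 by blast
  have "is_Pi (Suc (Suc (Suc 0))) theF" unfolding isPiS theF_def using s2 by blast
  then show ?thesis by (simp add: numeral_3_eq_3)
qed

lemma sat_theF: "sat theF e \<longleftrightarrow> PHI (e 0) (e 1) (e 2)"
  by (simp add: theF_def fMat_def PHI_def Mat_def)



theorem proposition3p11:
  shows "Pi_definable3 3 (\<lambda>\<rho> \<sigma> \<pi>. \<exists>n r. 1 \<le> n \<and> 1 \<le> r \<and>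
            \<sigma> = single n \<and> \<rho> = single r \<and> mult_part r \<pi> = n)"
  unfolding Pi_definable3_def
proof (intro exI[of _ theF] conjI allI)
  show "is_Pi 3 theF" by (rule is_Pi_theF)
  fix e
  show "sat theF e \<longleftrightarrow> (\<exists>n r. 1 \<le> n \<and> 1 \<le> r \<and> e 1 = single n \<and> e 0 = single r \<and> mult_part r (e 2) = n)"
    using sat_theF PHI_iff PHI'_iff unfolding Rel_def by blast
qed

end
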